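(* Let $\mathcal{P}$ be a finite collection of parameterizations of vector cycles of length 5 in $\mathbb{Z}^3$. Then there exists some $t \in T$ that is not represented by any parameterization in $\mathcal{P}$.
   Context: $T$ is the set of positive integers $t \equiv 2 \pmod 4$ whose square-free part has at least one odd prime factor $p$ with $p \equiv 2 \pmod 3$. A parameterization of a vector cycle of length 5 in $\mathbb{Z}^3$ is a list of five vectors $w_1, \ldots, w_5$ whose coordinates are integer linear forms $\lambda x + \mu y$ ($\lambda, \mu \in \mathbb{Z}$) in two variables $x, y$, such that $w_1 + \cdots + w_5 = \mathbf{0}$ identically and the squared Euclidean norms $|w_1|^2, \ldots, |w_5|^2$ are all equal to one and the same binary quadratic form $F(x,y) = ax^2 + bxy + cy^2$. Such a parameterization represents a positive integer $t$ if there exist integers $x, y$ with $F(x,y) = t$ (i.e., substituting these $x,y$ yields five vectors of $\mathbb{Z}^3$, each of magnitude $\sqrt{t}$, summing to zero). *)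

theory Defs
  imports "HOL-Computational_Algebra.Computational_Algebra"
begin

definition sqfree_part :: "nat \<Rightarrow> nat" where
  "sqfree_part t = (\<Prod>p\<in>{p\<in>prime_factors t. odd (multiplicity p t)}. p)"

definition T_set :: "nat set" where
  "T_set = {t. t > 0 \<and> t mod 4 = 2 \<and>
      (\<exists>p. prime p \<and> odd p \<and> p mod 3 = 2 \<and> p dvd sqfree_part t)}"

text \<open>A candidate parameterization: W i j = (lambda, mu) is the j-th coordinate (j < 3)
  of the i-th vector (i < 5), the integer linear form lambda*x + mu*y.\<close>
type_synonym param = "nat \<Rightarrow> nat \<Rightarrow> int \<times> int"

definition lin_eval :: "param \<Rightarrow> nat \<Rightarrow> nat \<Rightarrow> int \<Rightarrow> int \<Rightarrow> int" where
  "lin_eval W i j x y = fst (W i j) * x + snd (W i j) * y"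

definition norm_sq :: "param \<Rightarrow> nat \<Rightarrow> int \<Rightarrow> int \<Rightarrow> int" where
  "norm_sq W i x y = (\<Sum>j<3. (lin_eval W i j x y)^2)"

definition cycle_param_with_form :: "param \<Rightarrow> int \<Rightarrow> int \<Rightarrow> int \<Rightarrow> bool" where
  "cycle_param_with_form W a b c \<longleftrightarrow>
     (\<forall>x y. \<forall>j<3. (\<Sum>i<5. lin_eval W i j x y) = 0) \<and>
     (\<forall>x y. \<forall>i<5. norm_sq W i x y = a * x^2 + b * x * y + c * y^2)"

definition cycle_param :: "param \<Rightarrow> bool" where
  "cycle_param W \<longleftrightarrow> (\<exists>a b c. cycle_param_with_form W a b c)"

definition represents :: "param \<Rightarrow> nat \<Rightarrow> bool" where
  "represents W t \<longleftrightarrow> (\<exists>a b c. cycle_param_with_form W a b c \<and>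
      (\<exists>x y. a * x^2 + b * x * y + c * y^2 = int t))"

end

theory Submission
  imports Defs "HOL-Number_Theory.Number_Theory"
begin


lemma prime_3mod4_factor:
  fixes n :: nat
  assumes "n mod 4 = 3"
  shows "\<exists>q. prime q \<and> q dvd n \<and> q mod 4 = 3"
  using assms
proof (induction n rule: less_induct)
  case (less n)
  have n1: "n > 1" using less.prems by presburger
  show ?case
  proof (cases "prime n")
    case True then show ?thesis using less.prems by auto
  next
    case False
    obtain p where p: "prime p" "p dvd n" using n1 prime_factor_nat by (metis less_irrefl)
    obtain m where m: "n = p * m" using p by blast
    have pn: "p \<noteq> n" using False p by auto
    have p1: "p > 1" using p prime_gt_1_nat by blast
    have m0: "m > 0" using m n1 by (cases m) auto
    have mlt: "m < n" using m p1 m0 by simp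
    have oddn: "odd n" using less.prems by presburger
    have oddp: "odd p" using oddn m by auto
    show ?thesis
    proof (cases "p mod 4 = 3")
      case True then show ?thesis using p by blast
    next
      case False
      have "p mod 4 = 1" using oddp False by presburger
      then have "m mod 4 = 3" using less.prems m
        by (metis mod_mult_left_eq mod_mult_right_eq mult_1 mult.commute)
      then obtain q where "prime q" "q dvd m" "q mod 4 = 3" using less.IH[OF mlt] by blast
      then show ?thesis using m by auto
    qed
  qed
qed

lemma minus_one_nonres:
  fixes q :: nat and w :: int
  assumes q: "prime q" "q mod 4 = 3" and w: "[w^2 = -1] (mod int q)"
  shows False
proof -
  have q2: "2 < q" using q(2) by presburger
  have nz: "\<not> [-1 = 0] (mod int q)"
    using q2 by (simp add: cong_0_iff)
  have "QuadRes (int q) (-1)" unfolding QuadRes_def using w by blast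
  then have L: "Legendre (-1) (int q) = 1" using nz by (simp add: Legendre_def)
  have E: "[Legendre (-1) (int q) = (-1) ^ ((q - 1) div 2)] (mod int q)"
    using euler_criterion[OF q(1) q2] .
  have "odd ((q - 1) div 2)" using q(2) by presburger
  then have "(-1::int) ^ ((q - 1) div 2) = -1" by simp
  with E L have "[1 = -1] (mod int q)" by simp
  then have "int q dvd 2" by (simp add: cong_iff_dvd_diff)
  then have "q dvd 2" by presburger
  then show False using q2 by (simp add: nat_dvd_not_less)
qed

lemma sum_sq_3mod4:
  fixes q :: nat and u v :: int
  assumes q: "prime q" "q mod 4 = 3" and d: "int q dvd u^2 + v^2"
  shows "int q dvd v"
proof (rule ccontr)
  assume nv: "\<not> int q dvd v"
  have pq: "prime (int q)" using q(1) by simp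
  have "coprime v (int q)" using prime_imp_coprime[OF pq nv] by (simp add: ac_simps)
  then obtain s where s: "[v * s = 1] (mod int q)" using cong_solve_coprime_int by blast
  then have "int q dvd v * s - 1" by (simp add: cong_iff_dvd_diff)
  then have "int q dvd (v * s - 1) * (v * s + 1)" by simp
  then have a: "int q dvd (v*s)^2 - 1" by (simp add: algebra_simps power2_eq_square)
  have b: "int q dvd (u^2 + v^2) * s^2" using d by simp
  have "(u*s)^2 + 1 = (u^2 + v^2) * s^2 - ((v*s)^2 - 1)" by (simp add: algebra_simps power2_eq_square)
  then have "int q dvd (u*s)^2 + 1" using a b by (metis dvd_diff)
  then have "[(u*s)^2 = -1] (mod int q)" by (simp add: cong_iff_dvd_diff)
  then show False using minus_one_nonres[OF q] by blast
qed

lemma good_prime_aux: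
  fixes N z M :: int
  assumes M: "M > 0" "M mod 4 = 3" "M dvd z^2 - N" and cop: "coprime z N"
  shows "\<exists>q::nat. prime q \<and> q mod 4 = 3 \<and> \<not> int q dvd N \<and> [N = z^2] (mod int q)"
proof -
  have "nat M mod 4 = 3" using M by (metis nat_mod_distrib nat_numeral nat_int zero_le_numeral less_imp_le) 
  then obtain q where q: "prime q" "q dvd nat M" "q mod 4 = 3" using prime_3mod4_factor by blast
  have pq: "prime (int q)" using q(1) by simp
  have "int q dvd int (nat M)" using q(2) by (simp only: int_dvd_int_iff)
  then have "int q dvd M" using M(1) by simp
  then have d: "int q dvd z^2 - N" using M(3) by (rule dvd_trans)
  then have c: "[N = z^2] (mod int q)" by (metis cong_iff_dvd_diff dvd_diff_commute)
  have "\<not> int q dvd N"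
  proof
    assume "int q dvd N"
    then have "int q dvd z^2" using d by (metis dvd_add dvd_diff_commute diff_add_cancel)
    then have "int q dvd z" using pq prime_dvd_power by blast
    then have "is_unit (int q)" using cop \<open>int q dvd N\<close> coprime_common_divisor by blast
    then show False using pq not_prime_unit by blast
  qed
  then show ?thesis using q c by blast
qed

lemma coprime_lin: "coprime (k * N + 1) (N::int)"
proof (rule coprimeI)
  fix c assume "c dvd k * N + 1" "c dvd N"
  then have "c dvd (k * N + 1) - k * N" by (metis dvd_diff dvd_mult)
  then show "is_unit c" by simp
qed

lemma mod4_3: "(4*(X::int) + 3) mod 4 = 3" by presburger

lemma good_prime_odd:
  fixes N :: int
  assumes N: "N > 0" "\<not> 4 dvd N"
  shows "\<exists>q::nat. \<exists>z. prime q \<and> q mod 4 = 3 \<and> \<not> int q dvd N \<and> [N = z^2] (mod int q)"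
proof -
  consider (a) j where "N = 4*j+1" "j \<ge> 0" | (b) j where "N = 4*j+2" "j \<ge> 0"
    | (c) j where "N = 8*j+3" "j \<ge> 0" | (d) j where "N = 8*j+7" "j \<ge> 0"
  proof -
    have "(N = 4*(N div 4)+1) \<or> (N = 4*(N div 4)+2) \<or> (N = 8*(N div 8)+3) \<or> (N = 8*(N div 8)+7)"
      using N by presburger
    moreover have "N div 4 \<ge> 0" "N div 8 \<ge> 0" using N by simp_all
    ultimately show ?thesis using that by blast
  qed
  then show ?thesis
  proof cases
    case a
    have "(1 * N + 1)^2 - N = 4*(4*j^2+3*j) + 3" using a by (simp add: algebra_simps power2_eq_square)
    moreover have "(4*(4*j^2+3*j) + 3) mod 4 = (3::int)" by (rule mod4_3)
    moreover have "4*(4*j^2+3*j) + 3 > (0::int)" using a zero_le_power2[of j] by (smt (z3))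
    ultimately show ?thesis using good_prime_aux[of "4*(4*j^2+3*j) + 3" "1*N+1" N] coprime_lin[of 1 N] by auto
  next
    case b
    have "(1 * N + 1)^2 - N = 4*(4*j^2+5*j+1) + 3" using b by (simp add: algebra_simps power2_eq_square)
    moreover have "(4*(4*j^2+5*j+1) + 3) mod 4 = (3::int)" by (rule mod4_3)
    moreover have "4*(4*j^2+5*j+1) + 3 > (0::int)" using b zero_le_power2[of j] by (smt (z3))
    ultimately show ?thesis using good_prime_aux[of "4*(4*j^2+5*j+1) + 3" "1*N+1" N] coprime_lin[of 1 N] by auto
  next
    case c
    have "(2 * N + 1)^2 - N = 2 * (4*(32*j^2+27*j+5) + 3)" using c by (simp add: algebra_simps power2_eq_square)
    then have "4*(32*j^2+27*j+5) + 3 dvd (2 * N + 1)^2 - N" by (metis dvd_triv_right)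
    moreover have "(4*(32*j^2+27*j+5) + 3) mod 4 = (3::int)" by (rule mod4_3)
    moreover have "4*(32*j^2+27*j+5) + 3 > (0::int)" using c zero_le_power2[of j] by (smt (z3))
    ultimately show ?thesis using good_prime_aux[of "4*(32*j^2+27*j+5) + 3" "2*N+1" N] coprime_lin[of 2 N] by auto
  next
    case d
    have "(1::int)^2 - N = - 2 * (4*j + 3)" using d by (simp add: algebra_simps power2_eq_square)
    then have "4*j + 3 dvd (1::int)^2 - N" by (metis dvd_triv_right mult.assoc)
    moreover have "(4*j + 3) mod 4 = (3::int)" by (rule mod4_3)
    moreover have "4*j + 3 > (0::int)" using d by simp
    moreover have "coprime (1::int) N" by simp
    ultimately show ?thesis using good_prime_aux[of "4*j + 3" 1 N] by blast
  qed
qed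


lemma strip4:
  fixes N :: int
  assumes "N > 0"
  shows "\<exists>k N'. N = 4^k * N' \<and> N' > 0 \<and> \<not> 4 dvd N'"
  using assms
proof (induction "nat N" arbitrary: N rule: less_induct)
  case less
  show ?case
  proof (cases "4 dvd N")
    case False then show ?thesis using less.prems by (metis power_0 mult_1)
  next
    case True
    then obtain M where M: "N = 4 * M" by blast
    have "M > 0" using M less.prems by simp
    moreover have "nat M < nat N" using M less.prems by simp
    ultimately obtain k N' where "M = 4^k * N'" "N' > 0" "\<not> 4 dvd N'" using less.hyps by blast
    then have "N = 4^(Suc k) * N'" using M by simp
    then show ?thesis using \<open>N' > 0\<close> \<open>\<not> 4 dvd N'\<close> by blast
  qed
qed

lemma good_prime_form:
  fixes N :: int
  assumes "N > 0"
  shows "\<exists>q::nat. prime q \<and> odd q \<and> (\<forall>X Y. int q dvd X^2 + N*Y^2 \<longrightarrow> int q dvd X \<and> int q dvd Y)"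
proof -
  obtain k N' where k: "N = 4^k * N'" "N' > 0" "\<not> 4 dvd N'" using strip4[OF assms] by blast
  obtain q :: nat and z where q: "prime q" "q mod 4 = 3" "\<not> int q dvd N'" "[N' = z^2] (mod int q)"
    using good_prime_odd[OF k(2,3)] by blast
  have pq: "prime (int q)" using q(1) by simp
  have oq: "odd q" using q(2) by presburger
  have dz: "int q dvd N' - z^2" using q(4) by (simp add: cong_iff_dvd_diff)
  have nz: "\<not> int q dvd z"
  proof
    assume "int q dvd z"
    then have "int q dvd z^2" by (simp add: power2_eq_square)
    then have "int q dvd (N' - z^2) + z^2" using dz by (rule dvd_add[rotated])
    then show False using q(3) by simp
  qed
  have n2: "\<not> int q dvd 2^k"
  proof
    assume "int q dvd 2^k"
    then have "int q dvd 2" using pq prime_dvd_power by blast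
    then have "q dvd 2" by presburger
    then have "q \<le> 2" by (simp add: dvd_imp_le)
    then show False using q(2) by presburger
  qed
  show ?thesis
  proof (intro exI conjI allI impI)
    fix X Y assume d: "int q dvd X^2 + N*Y^2"
    define Y' where "Y' = 2^k * Y"
    have f: "(4::int)^k = (2^k)^2" by (simp add: power2_eq_square power_mult_distrib[symmetric])
    have e: "N * Y^2 = N' * Y'^2" unfolding Y'_def k(1) f by (simp add: power_mult_distrib)
    have "X^2 + (z*Y')^2 = (X^2 + N*Y^2) - (N' - z^2) * Y'^2" using e by (simp add: algebra_simps power2_eq_square)
    then have "int q dvd X^2 + (z*Y')^2" using d dz by (metis dvd_diff dvd_mult2)
    then have "int q dvd z * Y'" using sum_sq_3mod4[OF q(1,2)] by blast
    then have "int q dvd Y'" using pq nz prime_dvd_mult_iff by blast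
    then show qY: "int q dvd Y" unfolding Y'_def using pq n2 prime_dvd_mult_iff by blast
    then have "int q dvd N*Y^2" by (simp add: power2_eq_square)
    then have "int q dvd X^2" using d by (metis dvd_diff add_diff_cancel_right')
    then show "int q dvd X" using pq prime_dvd_power by blast
  qed (use q(1) oq in auto)
qed


lemma rank1_prime:
  fixes e :: int and G L :: "int \<Rightarrow> int \<Rightarrow> int"
  assumes e: "e \<noteq> 0" and GL: "\<forall>x y. e * G x y = (L x y)^2"
  shows "\<exists>q::nat. prime q \<and> odd q \<and> (\<forall>x y. int q dvd G x y \<longrightarrow> (int q)^2 dvd G x y)"
proof -
  have "2 * nat \<bar>e\<bar> + 1 \<noteq> 1" using e by simp
  then obtain q where q: "prime q" "q dvd 2 * nat \<bar>e\<bar> + 1" using prime_factor_nat by blast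
  have oq: "odd q" using q(2) by (metis dvd_trans even_add even_mult_iff odd_one dvd_triv_left)
  have pq: "prime (int q)" using q(1) by simp
  have "int q dvd int (2 * nat \<bar>e\<bar> + 1)" using q(2) by (simp only: int_dvd_int_iff)
  then have d1: "int q dvd 2 * \<bar>e\<bar> + 1" by (simp add: add.commute)
  have ne: "\<not> int q dvd e"
  proof
    assume "int q dvd e"
    then have "int q dvd 2 * \<bar>e\<bar>" by simp
    then have "int q dvd 1" using d1 by (metis dvd_add_right_iff)
    then show False using pq by (simp add: prime_int_iff)
  qed
  have cop: "coprime ((int q)^2) e" using prime_imp_coprime[OF pq ne] by simp
  show ?thesis
  proof (intro exI conjI allI impI)
    fix x y assume "int q dvd G x y"
    then have "int q dvd (L x y)^2" using GL by (metis dvd_mult)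
    then have "int q dvd L x y" using pq prime_dvd_power by blast
    then have "(int q)^2 dvd (L x y)^2" by simp
    then have "(int q)^2 dvd e * G x y" using GL by simp
    then show "(int q)^2 dvd G x y" using cop coprime_dvd_mult_right_iff by blast
  qed (use q(1) oq in auto)
qed

lemma good_prime_quad:
  fixes a b c :: int
  assumes N: "a * c - b^2 \<ge> 0"
  shows "\<exists>q::nat. prime q \<and> odd q \<and>
     (\<forall>x y. int q dvd a*x^2 + 2*b*x*y + c*y^2 \<longrightarrow> (int q)^2 dvd a*x^2 + 2*b*x*y + c*y^2)"
proof (cases "a * c - b^2 > 0")
  case True
  obtain q :: nat where q: "prime q" "odd q"
    "\<forall>X Y. int q dvd X^2 + (a*c - b^2)*Y^2 \<longrightarrow> int q dvd X \<and> int q dvd Y"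
    using good_prime_form[OF True] by blast
  show ?thesis
  proof (intro exI conjI allI impI)
    fix x y assume d: "int q dvd a*x^2 + 2*b*x*y + c*y^2"
    have "a * (a*x^2 + 2*b*x*y + c*y^2) = (a*x+b*y)^2 + (a*c - b^2)*y^2"
      by (simp add: algebra_simps power2_eq_square)
    moreover have "int q dvd a * (a*x^2 + 2*b*x*y + c*y^2)" using d by simp
    ultimately have qy: "int q dvd y" using q(3) by metis
    have "c * (a*x^2 + 2*b*x*y + c*y^2) = (c*y+b*x)^2 + (a*c - b^2)*x^2"
      by (simp add: algebra_simps power2_eq_square)
    moreover have "int q dvd c * (a*x^2 + 2*b*x*y + c*y^2)" using d by simp
    ultimately have qx: "int q dvd x" using q(3) by metis
    obtain x' where x': "x = int q * x'" using qx by blast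
    obtain y' where y': "y = int q * y'" using qy by blast
    have "a*x^2 + 2*b*x*y + c*y^2 = (int q)^2 * (a*x'^2 + 2*b*x'*y' + c*y'^2)"
      unfolding x' y' by (simp add: algebra_simps power2_eq_square)
    then show "(int q)^2 dvd a*x^2 + 2*b*x*y + c*y^2" by simp
  qed (use q in auto)
next
  case False
  then have N0: "a * c = b^2" using N by simp
  show ?thesis
  proof (cases "a = 0")
    case False
    have "\<forall>x y. a * (a*x^2 + 2*b*x*y + c*y^2) = (a*x+b*y)^2"
      using N0 by (simp add: algebra_simps power2_eq_square)
    then show ?thesis using rank1_prime[OF False, of "\<lambda>x y. a*x^2 + 2*b*x*y + c*y^2" "\<lambda>x y. a*x+b*y"] by simp
  next
    case a0: True
    then have b0: "b = 0" using N0 by simp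
    show ?thesis
    proof (cases "c = 0")
      case False
      have "\<forall>x y. c * (a*x^2 + 2*b*x*y + c*y^2) = (c*y)^2"
        using a0 b0 by (simp add: power2_eq_square)
      then show ?thesis using rank1_prime[OF False, of "\<lambda>x y. a*x^2 + 2*b*x*y + c*y^2" "\<lambda>x y. c*y"] by simp
    next
      case True
      have "prime (3::nat)" by simp
      then show ?thesis using a0 b0 True by (intro exI[of _ 3]) auto
    qed
  qed
qed


lemma norm_sq_expand:
  fixes W :: param
  shows "norm_sq W i x y = (\<Sum>j<3. (fst (W i j))^2) * x^2 + 2 * (\<Sum>j<3. fst (W i j) * snd (W i j)) * x * y
     + (\<Sum>j<3. (snd (W i j))^2) * y^2"
  by (simp add: norm_sq_def lin_eval_def numeral_3_eq_3 algebra_simps power2_eq_square)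

lemma lagrange3:
  fixes W :: param
  shows "(\<Sum>j<3. (fst (W i j))^2) * (\<Sum>j<3. (snd (W i j))^2) - (\<Sum>j<3. fst (W i j) * snd (W i j))^2 \<ge> (0::int)"
proof -
  let ?a0 = "fst (W i 0)" let ?a1 = "fst (W i (Suc 0))" let ?a2 = "fst (W i (Suc (Suc 0)))"
  let ?b0 = "snd (W i 0)" let ?b1 = "snd (W i (Suc 0))" let ?b2 = "snd (W i (Suc (Suc 0)))"
  have "(\<Sum>j<3. (fst (W i j))^2) * (\<Sum>j<3. (snd (W i j))^2) - (\<Sum>j<3. fst (W i j) * snd (W i j))^2
     = (?a0*?b1 - ?a1*?b0)^2 + (?a0*?b2 - ?a2*?b0)^2 + (?a1*?b2 - ?a2*?b1)^2"
    by (simp add: numeral_3_eq_3 algebra_simps power2_eq_square)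
  then show ?thesis by simp
qed

lemma good_prime_W:
  fixes W :: param
  shows "\<exists>q::nat. prime q \<and> odd q \<and> (\<forall>x y. int q dvd norm_sq W 0 x y \<longrightarrow> (int q)^2 dvd norm_sq W 0 x y)"
  using good_prime_quad[OF lagrange3[of W 0]] unfolding norm_sq_expand by simp

lemma sqfree_prod:
  fixes S :: "nat set"
  assumes S: "finite S" "\<forall>p\<in>S. prime p \<and> odd p" and p: "p \<in> S"
  shows "2 * \<Prod>S = p * (2 * \<Prod>(S - {p}))" and "\<not> p dvd 2 * \<Prod>(S - {p})"
proof -
  show "2 * \<Prod>S = p * (2 * \<Prod>(S - {p}))" using prod.remove[OF S(1) p, of id] by simp
  show "\<not> p dvd 2 * \<Prod>(S - {p})"
  proof
    assume d: "p dvd 2 * \<Prod>(S - {p})"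
    have pp: "prime p" "odd p" using S(2) p by auto
    show False
    proof (cases "p dvd 2")
      case True
      then have "p \<le> 2" by (simp add: dvd_imp_le)
      then show False using pp prime_gt_1_nat[of p] by (metis le_antisym even_numeral Suc_1 Suc_leI)
    next
      case False
      then have "p dvd \<Prod>(S - {p})" using d pp(1) prime_dvd_mult_iff by blast
      then obtain r where r: "r \<in> S - {p}" "p dvd id r" using prime_dvd_prod_iff[of "S - {p}" p id] S(1) pp(1) by auto
      then have "prime r" using S(2) by auto
      then have "p = r" using r pp(1) primes_dvd_imp_eq by (metis id_apply)
      then show False using r by auto
    qed
  qed
qed

theorem theorem8:
  fixes \<P> :: "param set"
  assumes "finite \<P>"
    and "\<forall>W\<in>\<P>. cycle_param W"
  shows "\<exists>t\<in>T_set. \<forall>W\<in>\<P>. \<not> represents W t"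
proof -
  have "\<forall>W. \<exists>q::nat. prime q \<and> odd q \<and> (\<forall>x y. int q dvd norm_sq W 0 x y \<longrightarrow> (int q)^2 dvd norm_sq W 0 x y)"
    using good_prime_W by blast
  then obtain qf where qf: "\<And>W. prime (qf W :: nat) \<and> odd (qf W) \<and>
      (\<forall>x y. int (qf W) dvd norm_sq W 0 x y \<longrightarrow> (int (qf W))^2 dvd norm_sq W 0 x y)"
    by metis
  define S where "S = insert (5::nat) (qf ` \<P>)"
  have fS: "finite S" unfolding S_def using assms(1) by simp
  have pS: "\<forall>p\<in>S. prime p \<and> odd p" unfolding S_def using qf by auto
  define t where "t = 2 * \<Prod>S"
  have key: "\<not> p^2 dvd t" if "p \<in> S" for p
  proof
    assume "p^2 dvd t"
    then have "p * p dvd p * (2 * \<Prod>(S - {p}))" using sqfree_prod(1)[OF fS pS that] unfolding t_def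
      by (simp add: power2_eq_square)
    moreover have "p > 0" using pS that prime_gt_0_nat by blast
    ultimately have "p dvd 2 * \<Prod>(S - {p})" by simp
    then show False using sqfree_prod(2)[OF fS pS that] by blast
  qed
  have podd: "odd (\<Prod>S)" using fS pS by (simp add: even_prod_iff)
  have tpos: "t > 0" unfolding t_def using podd by (simp add: odd_pos)
  have tmod: "t mod 4 = 2" unfolding t_def using podd by presburger
  have five: "5 \<in> S" unfolding S_def by simp
  have m5: "multiplicity 5 t = 1"
  proof -
    define m where "m = 2 * \<Prod>(S - {5})"
    have te: "t = 5 * m" using sqfree_prod(1)[OF fS pS five] unfolding t_def m_def by simp
    have "multiplicity 5 m = 0"
      using sqfree_prod(2)[OF fS pS five] unfolding m_def by (simp add: not_dvd_imp_multiplicity_0)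
    moreover have "multiplicity (5::nat) (5 * m) = Suc (multiplicity 5 m)"
    proof -
      have "\<Prod>(S - {5}) > 0" using fS pS prime_gt_0_nat by (auto intro!: prod_pos)
      then have "0 < m" unfolding m_def by simp
      then show ?thesis by (intro multiplicity_times_same) auto
    qed
    ultimately show ?thesis using te by simp
  qed
  have "5 dvd \<Prod>S" using dvd_prodI[of S 5 id] fS five by simp
  then have "5 dvd t" unfolding t_def by simp
  then have "5 \<in> prime_factors t"
    using tpos by (auto simp: in_prime_factors_iff)
  then have "5 \<in> {p\<in>prime_factors t. odd (multiplicity p t)}" using m5 by simp
  then have "5 dvd sqfree_part t" unfolding sqfree_part_def
    using dvd_prodI[of "{p\<in>prime_factors t. odd (multiplicity p t)}" 5 id] by simp
  then have tT: "t \<in> T_set" unfolding T_set_def using tpos tmod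
    by (intro CollectI conjI exI[of _ 5]) auto
  have nrep: "\<not> represents W t" if W: "W \<in> \<P>" for W
  proof
    assume "represents W t"
    then obtain a b c x y where cp: "cycle_param_with_form W a b c" and e: "a * x^2 + b * x * y + c * y^2 = int t"
      unfolding represents_def by blast
    have "norm_sq W 0 x y = int t" using cp e unfolding cycle_param_with_form_def by simp
    moreover have qS: "qf W \<in> S" unfolding S_def using W by simp
    moreover have "qf W dvd t" unfolding t_def using dvd_prodI[of S "qf W" id] fS qS by simp
    ultimately have "(int (qf W))^2 dvd int t" using qf[of W] by (metis int_dvd_int_iff)
    then have "(qf W)^2 dvd t" by (metis int_dvd_int_iff of_nat_power)
    then show False using key qS by blast
  qed
  show ?thesis using tT nrep by blast
qed

end
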